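(* Let $(E\to M,\rho,\langle\cdot,\cdot\rangle,[\cdot,\cdot])$ be a Courant algebroid, let $\mathcal{G}$ be a generalized metric on $E$ with $V_\pm=\ker(\mathcal{G}\mp 1)$, and let $D$ be a generalized connection on $E$ that is metric, i.e. $D\mathcal{G}=0$. Then for all $a_\pm,b_\pm\in\Gamma(V_\pm)$, \[ \mathrm{Ric}_{\mathrm{SSCV}}(a_\mp,b_\pm)=2\,\mathrm{Ric}_{\mathrm{JV}}(a_\mp,b_\pm)=\mathrm{Ric}^\pm_{\mathrm{GF}}(a_\mp,b_\pm)+\mathrm{Ric}^\mp_{\mathrm{GF}}(b_\pm,a_\mp). \]
   Context: A Courant algebroid $(E\to M,\rho,\langle\cdot,\cdot\rangle,[\cdot,\cdot])$ consists of a vector bundle $E$, a nondegenerate symmetric bilinear form $\langle\cdot,\cdot\rangle$ on $E$, a bundle map $\rho:E\to TM$ and a bilinear bracket on $\Gamma(E)$ satisfying $[a,[b,c]]=[[a,b],c]+[b,[a,c]]$, $\mathcal{L}_{\rho a}\langle b,c\rangle=\langle[a,b],c\rangle+\langle b,[a,c]\rangle$, and $2[a,a]=\rho^*d\langle a,a\rangle$ (identifying $E^*\cong E$ via $\langle\cdot,\cdot\rangle$). A generalized connection is a linear operator $D:\Gamma(E)\to\Gamma(E^*\otimes E)$ with $D(fa)=fDa+\rho^*df\otimes a$ and $\rho^*d\langle a,b\rangle=\langle Da,b\rangle+\langle a,Db\rangle$; write $D_ba:=(Da)(b)$, and regard $Da$ as the endomorphism $b\mapsto D_ba$, with $(Da)^*$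 its adjoint with respect to $\langle\cdot,\cdot\rangle$. The naive curvature is $\mathcal{R}_0(a,b)c:=D_aD_bc-D_bD_ac-D_{[a,b]}c$. A generalized metric is an endomorphism $\mathcal{G}$ of $E$ with $\mathcal{G}^2=1$ and $\mathcal{G}$ self-adjoint for $\langle\cdot,\cdot\rangle$; $V_\pm:=\ker(\mathcal{G}\mp1)$, so $E=V_+\oplus V_-$ orthogonally, and $a_\pm:=\tfrac12(1\pm\mathcal{G})a$. $D$ is metric if $D_a(\Gamma(V_\pm))\subseteq\Gamma(V_\pm)$ for all $a$. For metric $D$, define $\mathrm{Ric}^\pm_{\mathrm{GF}}(a_\mp,b_\pm)$ as the trace of the endomorphism $V_\pm\to V_\pm$, $c_\pm\mapsto \mathcal{R}_0(c_\pm,a_\mp)b_\pm$. Define the tensor $\mathcal{R}_{\mathrm{JV}}$ by $\langle\mathcal{R}_{\mathrm{JV}}(a,b)c,e\rangle:=\tfrac12\big(\langle\mathcal{R}_0(a,b)c,e\rangle+\langle\mathcal{R}_0(c,e)a,b\rangle+\langle(Da)^*b,(Dc)^*e\rangle\big)$, and $\mathrm{Ric}_{\mathrm{JV}}(a,b)$ as the trace of the endomorphism $c\mapsto\mathcal{R}_{\mathrm{JV}}(c,a)b$ of $E$. Finally $\mathrm{Ric}_{\mathrm{SSCV}}(a,b):=\mathrm{Ric}_{\mathrm{JV}}(a,b)-\mathrm{Ric}_{\mathrm{JV}}(\mathcal{G}a,\mathcal{G}b)$. *)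

theory Defs
  imports Complex_Main
begin

text \<open>Algebraic (Serre--Swan) model of a Courant algebroid.
  'r : the commutative real algebra of smooth functions C^\<infinity>(M);
  's : the C^\<infinity>(M)-module of sections \<Gamma>(E), with action sc;
  ip : the pairing \<langle>_,_\<rangle> on sections;
  anc a : the vector field \<rho>(a), acting as a derivation on functions;
  br : the bracket. Elements of \<Gamma>(E^*) are identified with sections via ip.\<close>

definition dual_basis ::
  "('r::comm_ring_1 \<Rightarrow> 's::ab_group_add \<Rightarrow> 's) \<Rightarrow> ('s \<Rightarrow> 's \<Rightarrow> 'r) \<Rightarrow> 's set
    \<Rightarrow> nat \<Rightarrow> (nat \<Rightarrow> 's) \<Rightarrow> (nat \<Rightarrow> 's) \<Rightarrow> bool" where
  "dual_basis sc ip P n e f \<longleftrightarrow>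
     (\<forall>i<n. e i \<in> P \<and> f i \<in> P) \<and> (\<forall>p\<in>P. p = (\<Sum>i<n. sc (ip p (f i)) (e i)))"

definition trace_on ::
  "('r::comm_ring_1 \<Rightarrow> 's::ab_group_add \<Rightarrow> 's) \<Rightarrow> ('s \<Rightarrow> 's \<Rightarrow> 'r) \<Rightarrow> 's set
    \<Rightarrow> ('s \<Rightarrow> 's) \<Rightarrow> 'r" where
  "trace_on sc ip P T =
     (SOME t. \<exists>n e f. dual_basis sc ip P n e f \<and> t = (\<Sum>i<n. ip (T (e i)) (f i)))"

definition courant_algebroid ::
  "('r::{comm_ring_1,real_algebra_1} \<Rightarrow> 's::ab_group_add \<Rightarrow> 's) \<Rightarrow> ('s \<Rightarrow> 's \<Rightarrow> 'r)
    \<Rightarrow> ('s \<Rightarrow> 'r \<Rightarrow> 'r) \<Rightarrow> ('s \<Rightarrow> 's \<Rightarrow> 's) \<Rightarrow> bool" where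
  "courant_algebroid sc ip anc br \<longleftrightarrow>
     module sc \<and>
     \<comment> \<open>pairing: C^\<infinity>-bilinear, symmetric, nondegenerate (E finite rank)\<close>
     (\<forall>a b c. ip (a + b) c = ip a c + ip b c) \<and>
     (\<forall>f a b. ip (sc f a) b = f * ip a b) \<and>
     (\<forall>a b. ip a b = ip b a) \<and>
     (\<exists>n e f. dual_basis sc ip UNIV n e f) \<and>
     \<comment> \<open>anchor: bundle map E \<rightarrow> TM, i.e. C^\<infinity>-linear map into vector fields\<close>
     (\<forall>a b g. anc (a + b) g = anc a g + anc b g) \<and>
     (\<forall>f a g. anc (sc f a) g = f * anc a g) \<and>
     (\<forall>a g h. anc a (g + h) = anc a g + anc a h) \<and>
     (\<forall>a r g. anc a (of_real r * g) = of_real r * anc a g) \<and>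
     (\<forall>a g h. anc a (g * h) = g * anc a h + h * anc a g) \<and>
     \<comment> \<open>bracket: real-bilinear\<close>
     (\<forall>a b c. br (a + b) c = br a c + br b c) \<and>
     (\<forall>a b c. br a (b + c) = br a b + br a c) \<and>
     (\<forall>r a b. br (sc (of_real r) a) b = sc (of_real r) (br a b)) \<and>
     (\<forall>r a b. br a (sc (of_real r) b) = sc (of_real r) (br a b)) \<and>
     \<comment> \<open>Courant algebroid axioms\<close>
     (\<forall>a b c. br a (br b c) = br (br a b) c + br b (br a c)) \<and>
     (\<forall>a b c. anc a (ip b c) = ip (br a b) c + ip b (br a c)) \<and>
     (\<forall>a c. ip (sc 2 (br a a)) c = anc c (ip a a))"

text \<open>Generalized connection; D b a = D_b a.\<close>
definition gen_connection ::
  "('r::{comm_ring_1,real_algebra_1} \<Rightarrow> 's::ab_group_add \<Rightarrow> 's) \<Rightarrow> ('s \<Rightarrow> 's \<Rightarrow> 'r)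
    \<Rightarrow> ('s \<Rightarrow> 'r \<Rightarrow> 'r) \<Rightarrow> ('s \<Rightarrow> 's \<Rightarrow> 's) \<Rightarrow> bool" where
  "gen_connection sc ip anc D \<longleftrightarrow>
     (\<forall>b a a'. D b (a + a') = D b a + D b a') \<and>
     (\<forall>b b' a. D (b + b') a = D b a + D b' a) \<and>
     (\<forall>f b a. D (sc f b) a = sc f (D b a)) \<and>
     (\<forall>b f a. D b (sc f a) = sc f (D b a) + sc (anc b f) a) \<and>
     (\<forall>c a b. anc c (ip a b) = ip (D c a) b + ip a (D c b))"

definition gen_metric ::
  "('r::comm_ring_1 \<Rightarrow> 's::ab_group_add \<Rightarrow> 's) \<Rightarrow> ('s \<Rightarrow> 's \<Rightarrow> 'r) \<Rightarrow> ('s \<Rightarrow> 's) \<Rightarrow> bool" where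
  "gen_metric sc ip G \<longleftrightarrow>
     (\<forall>a b. G (a + b) = G a + G b) \<and> (\<forall>f a. G (sc f a) = sc f (G a)) \<and>
     (\<forall>a. G (G a) = a) \<and> (\<forall>a b. ip (G a) b = ip a (G b))"

definition Vplus :: "('s \<Rightarrow> 's) \<Rightarrow> 's set" where
  "Vplus G = {a. G a = a}"

definition Vminus :: "('s::uminus \<Rightarrow> 's) \<Rightarrow> 's set" where
  "Vminus G = {a. G a = - a}"

definition metric_connection :: "('s::uminus \<Rightarrow> 's) \<Rightarrow> ('s \<Rightarrow> 's \<Rightarrow> 's) \<Rightarrow> bool" where
  "metric_connection G D \<longleftrightarrow>
     (\<forall>a x. x \<in> Vplus G \<longrightarrow> D a x \<in> Vplus G) \<and> (\<forall>a x. x \<in> Vminus G \<longrightarrow> D a x \<in> Vminus G)"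

definition R0 :: "('s::ab_group_add \<Rightarrow> 's \<Rightarrow> 's) \<Rightarrow> ('s \<Rightarrow> 's \<Rightarrow> 's) \<Rightarrow> 's \<Rightarrow> 's \<Rightarrow> 's \<Rightarrow> 's" where
  "R0 br D a b c = D a (D b c) - D b (D a c) - D (br a b) c"

definition adj :: "('s \<Rightarrow> 's \<Rightarrow> 'r) \<Rightarrow> ('s \<Rightarrow> 's) \<Rightarrow> 's \<Rightarrow> 's" where
  "adj ip T x = (THE y. \<forall>z. ip y z = ip x (T z))"

text \<open>The four-form <R_JV(a,b)c, e>; here D a is the endomorphism b \<mapsto> D_b a.\<close>
definition RJV4 ::
  "('s::ab_group_add \<Rightarrow> 's \<Rightarrow> 'r::{comm_ring_1,real_algebra_1}) \<Rightarrow> ('s \<Rightarrow> 's \<Rightarrow> 's)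
    \<Rightarrow> ('s \<Rightarrow> 's \<Rightarrow> 's) \<Rightarrow> 's \<Rightarrow> 's \<Rightarrow> 's \<Rightarrow> 's \<Rightarrow> 'r" where
  "RJV4 ip br D a b c e = of_real (1/2) *
     (ip (R0 br D a b c) e + ip (R0 br D c e a) b
      + ip (adj ip (\<lambda>x. D x a) b) (adj ip (\<lambda>x. D x c) e))"

definition RJV ::
  "('s::ab_group_add \<Rightarrow> 's \<Rightarrow> 'r::{comm_ring_1,real_algebra_1}) \<Rightarrow> ('s \<Rightarrow> 's \<Rightarrow> 's)
    \<Rightarrow> ('s \<Rightarrow> 's \<Rightarrow> 's) \<Rightarrow> 's \<Rightarrow> 's \<Rightarrow> 's \<Rightarrow> 's" where
  "RJV ip br D a b c = (THE x. \<forall>e. ip x e = RJV4 ip br D a b c e)"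

definition Ric_JV ::
  "('r::{comm_ring_1,real_algebra_1} \<Rightarrow> 's::ab_group_add \<Rightarrow> 's) \<Rightarrow> ('s \<Rightarrow> 's \<Rightarrow> 'r)
    \<Rightarrow> ('s \<Rightarrow> 's \<Rightarrow> 's) \<Rightarrow> ('s \<Rightarrow> 's \<Rightarrow> 's) \<Rightarrow> 's \<Rightarrow> 's \<Rightarrow> 'r" where
  "Ric_JV sc ip br D a b = trace_on sc ip UNIV (\<lambda>c. RJV ip br D c a b)"

definition Ric_SSCV ::
  "('r::{comm_ring_1,real_algebra_1} \<Rightarrow> 's::ab_group_add \<Rightarrow> 's) \<Rightarrow> ('s \<Rightarrow> 's \<Rightarrow> 'r)
    \<Rightarrow> ('s \<Rightarrow> 's \<Rightarrow> 's) \<Rightarrow> ('s \<Rightarrow> 's \<Rightarrow> 's) \<Rightarrow> ('s \<Rightarrow> 's) \<Rightarrow> 's \<Rightarrow> 's \<Rightarrow> 'r" where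
  "Ric_SSCV sc ip br D G a b = Ric_JV sc ip br D a b - Ric_JV sc ip br D (G a) (G b)"

text \<open>Ric^\<pm>_GF(a,b) = trace over V_\<pm> of c \<mapsto> R_0(c,a)b; P is V_+ or V_-.\<close>
definition Ric_GF ::
  "('r::comm_ring_1 \<Rightarrow> 's::ab_group_add \<Rightarrow> 's) \<Rightarrow> ('s \<Rightarrow> 's \<Rightarrow> 'r)
    \<Rightarrow> ('s \<Rightarrow> 's \<Rightarrow> 's) \<Rightarrow> ('s \<Rightarrow> 's \<Rightarrow> 's) \<Rightarrow> 's set \<Rightarrow> 's \<Rightarrow> 's \<Rightarrow> 'r" where
  "Ric_GF sc ip br D P a b = trace_on sc ip P (\<lambda>c. R0 br D c a b)"

end

theory Submission
  imports Defs
begin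

locale CAD =
  fixes sc :: "'r::{comm_ring_1,real_algebra_1} \<Rightarrow> 's::ab_group_add \<Rightarrow> 's"
    and ip :: "'s \<Rightarrow> 's \<Rightarrow> 'r" and anc :: "'s \<Rightarrow> 'r \<Rightarrow> 'r"
    and br :: "'s \<Rightarrow> 's \<Rightarrow> 's" and D :: "'s \<Rightarrow> 's \<Rightarrow> 's"
  assumes CA: "courant_algebroid sc ip anc br"
    and GC: "gen_connection sc ip anc D"
begin

lemmas CAc = CA[unfolded courant_algebroid_def]
lemmas GCc = GC[unfolded gen_connection_def]
lemmas CA_modl = CAc[THEN conjunct1]
lemmas CA_ipadd = CAc[THEN conjunct2, THEN conjunct1]
lemmas CA_ipsc = CAc[THEN conjunct2, THEN conjunct2, THEN conjunct1]
lemmas CA_ipsym = CAc[THEN conjunct2, THEN conjunct2, THEN conjunct2, THEN conjunct1]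
lemmas CA_basis = CAc[THEN conjunct2, THEN conjunct2, THEN conjunct2, THEN conjunct2, THEN conjunct1]
lemmas CA_ancaddL = CAc[THEN conjunct2, THEN conjunct2, THEN conjunct2, THEN conjunct2, THEN conjunct2, THEN conjunct1]
lemmas CA_ancscL = CAc[THEN conjunct2, THEN conjunct2, THEN conjunct2, THEN conjunct2, THEN conjunct2, THEN conjunct2, THEN conjunct1]
lemmas CA_ancaddR = CAc[THEN conjunct2, THEN conjunct2, THEN conjunct2, THEN conjunct2, THEN conjunct2, THEN conjunct2, THEN conjunct2, THEN conjunct1]
lemmas CA_ancreal = CAc[THEN conjunct2, THEN conjunct2, THEN conjunct2, THEN conjunct2, THEN conjunct2, THEN conjunct2, THEN conjunct2, THEN conjunct2, THEN conjunct1]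
lemmas CA_ancmult = CAc[THEN conjunct2, THEN conjunct2, THEN conjunct2, THEN conjunct2, THEN conjunct2, THEN conjunct2, THEN conjunct2, THEN conjunct2, THEN conjunct2, THEN conjunct1]
lemmas CA_braddL = CAc[THEN conjunct2, THEN conjunct2, THEN conjunct2, THEN conjunct2, THEN conjunct2, THEN conjunct2, THEN conjunct2, THEN conjunct2, THEN conjunct2, THEN conjunct2, THEN conjunct1]
lemmas CA_braddR = CAc[THEN conjunct2, THEN conjunct2, THEN conjunct2, THEN conjunct2, THEN conjunct2, THEN conjunct2, THEN conjunct2, THEN conjunct2, THEN conjunct2, THEN conjunct2, THEN conjunct2, THEN conjunct1]
lemmas CA_brrealL = CAc[THEN conjunct2, THEN conjunct2, THEN conjunct2, THEN conjunct2, THEN conjunct2, THEN conjunct2, THEN conjunct2, THEN conjunct2, THEN conjunct2, THEN conjunct2, THEN conjunct2, THEN conjunct2, THEN conjunct1]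
lemmas CA_brrealR = CAc[THEN conjunct2, THEN conjunct2, THEN conjunct2, THEN conjunct2, THEN conjunct2, THEN conjunct2, THEN conjunct2, THEN conjunct2, THEN conjunct2, THEN conjunct2, THEN conjunct2, THEN conjunct2, THEN conjunct2, THEN conjunct1]
lemmas CA_jacobi = CAc[THEN conjunct2, THEN conjunct2, THEN conjunct2, THEN conjunct2, THEN conjunct2, THEN conjunct2, THEN conjunct2, THEN conjunct2, THEN conjunct2, THEN conjunct2, THEN conjunct2, THEN conjunct2, THEN conjunct2, THEN conjunct2, THEN conjunct1]
lemmas CA_inv = CAc[THEN conjunct2, THEN conjunct2, THEN conjunct2, THEN conjunct2, THEN conjunct2, THEN conjunct2, THEN conjunct2, THEN conjunct2, THEN conjunct2, THEN conjunct2, THEN conjunct2, THEN conjunct2, THEN conjunct2, THEN conjunct2, THEN conjunct2, THEN conjunct1]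
lemmas CA_sq = CAc[THEN conjunct2, THEN conjunct2, THEN conjunct2, THEN conjunct2, THEN conjunct2, THEN conjunct2, THEN conjunct2, THEN conjunct2, THEN conjunct2, THEN conjunct2, THEN conjunct2, THEN conjunct2, THEN conjunct2, THEN conjunct2, THEN conjunct2, THEN conjunct2]
lemmas GC_DaddR = GCc[THEN conjunct1]
lemmas GC_DaddL = GCc[THEN conjunct2, THEN conjunct1]
lemmas GC_DscL = GCc[THEN conjunct2, THEN conjunct2, THEN conjunct1]
lemmas GC_DscR = GCc[THEN conjunct2, THEN conjunct2, THEN conjunct2, THEN conjunct1]
lemmas GC_Dmet = GCc[THEN conjunct2, THEN conjunct2, THEN conjunct2, THEN conjunct2]

lemma modl: "module sc" by (rule CA_modl)

sublocale M: module sc by (rule modl)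

lemma ip_addL[simp]: "ip (a + b) c = ip a c + ip b c" using CA_ipadd by blast
lemma ip_scL[simp]: "ip (sc f a) b = f * ip a b" using CA_ipsc by blast
lemma ip_sym: "ip a b = ip b a" using CA_ipsym by blast
lemma ip_addR[simp]: "ip c (a + b) = ip c a + ip c b" by (metis ip_sym[of c "a+b"] ip_addL[of a b c] ip_sym[of a c] ip_sym[of b c])
lemma ip_scR[simp]: "ip b (sc f a) = f * ip b a" by (metis ip_scL[of f a b] ip_sym[of b "sc f a"] ip_sym[of a b])
lemma ip_zeroL[simp]: "ip 0 a = 0"
proof -
  have "ip (0+0) a = ip 0 a + ip 0 a" by (rule ip_addL)
  then show ?thesis by simp
qed
lemma ip_zeroR[simp]: "ip a 0 = 0" by (metis ip_zeroL[of a] ip_sym[of a 0])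
lemma ip_minusL[simp]: "ip (- a) b = - ip a b"
proof -
  have "ip (- a + a) b = ip (-a) b + ip a b" by (rule ip_addL)
  then have "ip (-a) b + ip a b = 0" by simp
  then show ?thesis by (simp add: eq_neg_iff_add_eq_0)
qed
lemma ip_minusR[simp]: "ip b (- a) = - ip b a" by (metis ip_minusL[of a b] ip_sym[of b "-a"] ip_sym[of a b])
lemma ip_diffL[simp]: "ip (a - c) b = ip a b - ip c b" by (simp only: diff_conv_add_uminus ip_addL ip_minusL)
lemma ip_diffR[simp]: "ip b (a - c) = ip b a - ip b c" by (simp only: diff_conv_add_uminus ip_addR ip_minusR)
lemma ip_sumL: "ip (\<Sum>i<(n::nat). x i) y = (\<Sum>i<n. ip (x i) y)" by (induction n) auto
lemma ip_sumR: "ip y (\<Sum>i<(n::nat). x i) = (\<Sum>i<n. ip y (x i))" by (induction n) auto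

lemma basis_ex: "\<exists>n e f. dual_basis sc ip UNIV n e f" using CA_basis by blast

lemma nondeg: assumes "\<And>z. ip x z = 0" shows "x = 0"
proof -
  obtain n e f where b: "dual_basis sc ip UNIV n e f" using basis_ex by blast
  then have "x = (\<Sum>i<(n::nat). sc (ip x (f i)) (e i))" unfolding dual_basis_def by blast
  also have "\<dots> = 0" using assms by simp
  finally show ?thesis .
qed

lemma nondeg2: assumes "\<And>z. ip x z = ip y z" shows "x = y"
proof -
  have "x - y = 0" by (rule nondeg) (simp add: assms)
  then show ?thesis by simp
qed

lemma lin_sum:
  assumes "\<And>z z'. L (z + z') = L z + L z'" and "\<And>g z. L (sc g z) = g * L z"
  shows "L (\<Sum>i<(n::nat). sc (c i) (x i)) = (\<Sum>i<n. c i * L (x i))"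
proof (induction n)
  case 0
  have "L 0 = L 0 + L 0" using assms(1)[of 0 0] by simp
  then show ?case by simp
next
  case (Suc n) then show ?case by (simp add: assms)
qed

lemma repr:
  assumes "\<And>z z'. L (z + z') = L z + L z'" and "\<And>g z. L (sc g z) = g * L z"
  shows "\<exists>!y. \<forall>z. ip y z = L z"
proof -
  obtain n e f where b: "dual_basis sc ip UNIV n e f" using basis_ex by blast
  define y where "y = (\<Sum>i<(n::nat). sc (L (e i)) (f i))"
  have "ip y z = L z" for z
  proof -
    have "ip y z = (\<Sum>i<(n::nat). L (e i) * ip (f i) z)" unfolding y_def by (simp add: ip_sumL)
    moreover have "L z = (\<Sum>i<(n::nat). ip z (f i) * L (e i))"
    proof -
      have "z = (\<Sum>i<n. sc (ip z (f i)) (e i))" using b unfolding dual_basis_def by blast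
      then have "L z = L (\<Sum>i<n. sc (ip z (f i)) (e i))" by simp
      also have "\<dots> = (\<Sum>i<(n::nat). ip z (f i) * L (e i))" by (rule lin_sum[OF assms])
      finally show ?thesis .
    qed
    ultimately show ?thesis by (simp add: ip_sym mult.commute)
  qed
  then show ?thesis by (intro ex1I[of _ y]) (auto intro: nondeg2)
qed


lemma anc_addL[simp]: "anc (a + b) g = anc a g + anc b g" using CA_ancaddL by blast
lemma anc_scL[simp]: "anc (sc f a) g = f * anc a g" using CA_ancscL by blast
lemma anc_addR[simp]: "anc a (g + h) = anc a g + anc a h" using CA_ancaddR by blast
lemma anc_mult[simp]: "anc a (g * h) = g * anc a h + h * anc a g" using CA_ancmult by blast
lemma anc_zeroR[simp]: "anc a 0 = 0"
proof -
  have "anc a (0+0) = anc a 0 + anc a 0" by (rule anc_addR)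
  then show ?thesis by simp
qed
lemma anc_minusR[simp]: "anc a (- g) = - anc a g"
proof -
  have "anc a (- g + g) = anc a (-g) + anc a g" by (rule anc_addR)
  then have "anc a (-g) + anc a g = 0" by simp
  then show ?thesis by (simp add: eq_neg_iff_add_eq_0)
qed
lemma anc_diffR[simp]: "anc a (g - h) = anc a g - anc a h" by (simp only: diff_conv_add_uminus anc_addR anc_minusR)
lemma anc_one[simp]: "anc a 1 = 0"
proof -
  have "anc a (1*1) = 1 * anc a 1 + 1 * anc a 1" by (rule anc_mult)
  then show ?thesis by simp
qed
lemma anc_two[simp]: "anc a 2 = 0"
proof -
  have "anc a (1+1) = 0" by (simp only: anc_addR anc_one add_0)
  then show ?thesis by simp
qed
lemma anc_zeroL[simp]: "anc 0 g = 0" using anc_scL[of 0 0 g] by simp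
lemma anc_minusL[simp]: "anc (- a) g = - anc a g" using anc_scL[of "-1" a g] by simp
lemma anc_diffL[simp]: "anc (a - b) g = anc a g - anc b g" by (simp only: diff_conv_add_uminus anc_addL anc_minusL)

lemma br_addL[simp]: "br (a + b) c = br a c + br b c" using CA_braddL by blast
lemma br_addR[simp]: "br a (b + c) = br a b + br a c" using CA_braddR by blast
lemma br_jac: "br a (br b c) = br (br a b) c + br b (br a c)" using CA_jacobi by blast
lemma br_inv: "anc a (ip b c) = ip (br a b) c + ip b (br a c)" using CA_inv by blast
lemma br_sq: "ip (sc 2 (br a a)) c = anc c (ip a a)" using CA_sq by blast
lemma br_zeroL[simp]: "br 0 a = 0"
proof -
  have "br (0+0) a = br 0 a + br 0 a" by (rule br_addL)
  then show ?thesis by simp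
qed
lemma br_zeroR[simp]: "br a 0 = 0"
proof -
  have "br a (0+0) = br a 0 + br a 0" by (rule br_addR)
  then show ?thesis by simp
qed
lemma br_minusL[simp]: "br (- a) b = - br a b"
proof -
  have "br (- a + a) b = br (-a) b + br a b" by (rule br_addL)
  then have "br (-a) b + br a b = 0" by simp
  then show ?thesis by (simp add: eq_neg_iff_add_eq_0)
qed
lemma br_minusR[simp]: "br b (- a) = - br b a"
proof -
  have "br b (- a + a) = br b (-a) + br b a" by (rule br_addR)
  then have "br b (-a) + br b a = 0" by simp
  then show ?thesis by (simp add: eq_neg_iff_add_eq_0)
qed
lemma br_diffL[simp]: "br (a - c) b = br a b - br c b" by (simp only: diff_conv_add_uminus br_addL br_minusL)
lemma br_diffR[simp]: "br b (a - c) = br b a - br b c" by (simp only: diff_conv_add_uminus br_addR br_minusR)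

lemma D_addR[simp]: "D b (a + a') = D b a + D b a'" using GC_DaddR by blast
lemma D_addL[simp]: "D (b + b') a = D b a + D b' a" using GC_DaddL by blast
lemma D_scL[simp]: "D (sc f b) a = sc f (D b a)" using GC_DscL by blast
lemma D_scR[simp]: "D b (sc f a) = sc f (D b a) + sc (anc b f) a" using GC_DscR by blast
lemma D_met: "anc c (ip a b) = ip (D c a) b + ip a (D c b)" using GC_Dmet by blast
lemma D_zeroL[simp]: "D 0 a = 0"
proof -
  have "D (0+0) a = D 0 a + D 0 a" by (rule D_addL)
  then show ?thesis by simp
qed
lemma D_zeroR[simp]: "D a 0 = 0"
proof -
  have "D a (0+0) = D a 0 + D a 0" by (rule D_addR)
  then show ?thesis by simp
qed
lemma D_minusL[simp]: "D (- a) b = - D a b"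
proof -
  have "D (- a + a) b = D (-a) b + D a b" by (rule D_addL)
  then have "D (-a) b + D a b = 0" by simp
  then show ?thesis by (simp add: eq_neg_iff_add_eq_0)
qed
lemma D_minusR[simp]: "D b (- a) = - D b a"
proof -
  have "D b (- a + a) = D b (-a) + D b a" by (rule D_addR)
  then have "D b (-a) + D b a = 0" by simp
  then show ?thesis by (simp add: eq_neg_iff_add_eq_0)
qed
lemma D_diffL[simp]: "D (a - c) b = D a b - D c b" by (simp only: diff_conv_add_uminus D_addL D_minusL)
lemma D_diffR[simp]: "D b (a - c) = D b a - D b c" by (simp only: diff_conv_add_uminus D_addR D_minusR)

definition hf :: 'r where "hf = of_real (1/2)"
lemma hf2: "hf * 2 = 1"
proof -
  have "(of_real (1/2) :: 'r) * of_real 2 = of_real (1/2 * 2)" by (simp only: of_real_mult)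
  then show ?thesis unfolding hf_def by simp
qed
lemma hf2'[simp]: "2 * hf = 1" using hf2 by (simp add: mult.commute)
lemma hfhf: "hf + hf = 1" using hf2 by (simp add: mult_2_right)
lemma cancel2: "2 * (x::'r) = 2 * y \<Longrightarrow> x = y"
  by (metis hf2 mult.assoc mult_1)
lemma cancel2s: "x + x = 0 \<Longrightarrow> (x::'s) = 0"
proof -
  assume "x + x = 0"
  then have "sc hf (x + x) = 0" by simp
  then have "sc hf x + sc hf x = 0" by (simp add: M.scale_right_distrib)
  then have "sc (hf + hf) x = 0" by (simp only: M.scale_left_distrib)
  then show ?thesis by (simp add: hfhf)
qed

lemma cancel2s_r: "x + x = 0 \<Longrightarrow> (x::'r) = 0"
proof -
  assume "x + x = 0"
  then have "2 * x = 2 * 0" by (simp only: mult_2 add_0)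
  then show ?thesis by (rule cancel2)
qed

definition grad where "grad g = (THE y. \<forall>z. ip y z = anc z g)"
lemma ip_grad[simp]: "ip (grad g) z = anc z g"
proof -
  have "\<exists>!y. \<forall>z. ip y z = anc z g" by (rule repr) simp_all
  then show ?thesis unfolding grad_def by (rule theI'[THEN spec])
qed
lemma grad_zero[simp]: "grad 0 = 0" by (rule nondeg) simp
lemma grad_mult: "grad (g * k) = sc g (grad k) + sc k (grad g)" by (rule nondeg2) simp

lemma br_scR[simp]: "br a (sc f b) = sc f (br a b) + sc (anc a f) b"
proof (rule nondeg2)
  fix z
  show "ip (br a (sc f b)) z = ip (sc f (br a b) + sc (anc a f) b) z"
    using br_inv[of a "sc f b" z] br_inv[of a b z] by (simp add: algebra_simps)
qed

lemma br_symm: "br a b + br b a = grad (ip a b)"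
proof (rule nondeg2)
  fix c
  have s: "\<And>x. 2 * ip (br x x) c = anc c (ip x x)" using br_sq by simp
  have "2 * ip (br (a+b) (a+b)) c = anc c (ip (a+b) (a+b))" by (rule s)
  then have "2 * (ip (br a b) c + ip (br b a) c) = 2 * anc c (ip a b)"
    using s[of a] s[of b] ip_sym[of b a] by (simp add: algebra_simps)
  then show "ip (br a b + br b a) c = ip (grad (ip a b)) c" using cancel2 by simp
qed


lemma anc_hom_sc: "sc (anc a (anc b f) - anc b (anc a f) - anc (br a b) f) c = 0"
proof -
  have j1: "br a (br b (sc f c)) = br (br a b) (sc f c) + br b (br a (sc f c))" by (rule br_jac)
  have j2: "sc f (br a (br b c)) = sc f (br (br a b) c) + sc f (br b (br a c))"
    by (simp add: br_jac[of a b c] M.scale_right_distrib)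
  from j1 j2 show ?thesis by (simp add: algebra_simps)
qed

lemma anchor_hom: "anc a (anc b f) - anc b (anc a f) - anc (br a b) f = 0"
proof -
  define r where "r e = anc a (anc e f) - anc e (anc a f) - anc (br a e) f" for e
  have radd: "r (z + z') = r z + r z'" for z z' unfolding r_def by (simp add: algebra_simps)
  have rsc: "r (sc g z) = g * r z" for g z unfolding r_def by (simp add: algebra_simps)
  obtain n u v where b: "dual_basis sc ip UNIV n u v" using basis_ex by blast
  have "b = (\<Sum>i<n. sc (ip b (v i)) (u i))" using b unfolding dual_basis_def by blast
  then have "r b = r (\<Sum>i<n. sc (ip b (v i)) (u i))" by simp
  also have "\<dots> = (\<Sum>i<n. ip b (v i) * r (u i))" by (rule lin_sum[OF radd rsc])
  also have "\<dots> = (\<Sum>i<n. ip (sc (r (u i)) b) (v i))" by (simp add: mult.commute)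
  also have "\<dots> = 0" using anc_hom_sc unfolding r_def by simp
  finally show ?thesis unfolding r_def .
qed

lemma anchor_hom': "anc a (anc b f) = anc b (anc a f) + anc (br a b) f"
  using anchor_hom[of a b f] by (simp add: algebra_simps)

lemma br_swap: "br b a = grad (ip a b) - br a b"
  using br_symm[of a b] by (simp add: algebra_simps)

lemma br_scL: "br (sc g c) a = sc g (br c a) - sc (anc a g) c + sc (ip c a) (grad g)"
proof -
  have "br (sc g c) a = grad (ip a (sc g c)) - br a (sc g c)" by (rule br_swap)
  also have "\<dots> = sc g (grad (ip a c)) + sc (ip a c) (grad g) - sc g (br a c) - sc (anc a g) c"
    by (simp add: grad_mult)
  also have "br a c = grad (ip c a) - br c a" by (rule br_swap)
  finally show ?thesis using ip_sym[of a c] by (simp add: algebra_simps)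
qed

lemma R0_scL: "R0 br D (sc g c) a b = sc g (R0 br D c a b) - sc (ip c a) (D (grad g) b)"
  unfolding R0_def by (simp add: br_scL algebra_simps)
lemma R0_addL: "R0 br D (c + c') a b = R0 br D c a b + R0 br D c' a b"
  unfolding R0_def by (simp add: algebra_simps)
lemma R0_addM: "R0 br D b (e + e') c = R0 br D b e c + R0 br D b e' c"
  unfolding R0_def by (simp add: algebra_simps)
lemma R0_scM: "R0 br D b (sc g e) c = sc g (R0 br D b e c)"
  unfolding R0_def by (simp add: algebra_simps)
lemma R0_addR: "R0 br D b e (c + c') = R0 br D b e c + R0 br D b e c'"
  unfolding R0_def by (simp add: algebra_simps)
lemma R0_scR: "R0 br D b e (sc g c) = sc g (R0 br D b e c)"
  unfolding R0_def using anchor_hom'[of b e g] by (simp add: algebra_simps)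
lemma R0_minusL: "R0 br D (- c) a b = - R0 br D c a b"
  unfolding R0_def by (simp add: algebra_simps)
lemma R0_minusM: "R0 br D c (- a) b = - R0 br D c a b"
  unfolding R0_def by (simp add: algebra_simps)
lemma R0_minusR: "R0 br D c a (- b) = - R0 br D c a b"
  unfolding R0_def by (simp add: algebra_simps)

lemma R0_skew: "ip (R0 br D b e c) a = - ip c (R0 br D b e a)"
proof -
  have "ip (R0 br D b e c) a + ip c (R0 br D b e a)
      = anc b (anc e (ip c a)) - anc e (anc b (ip c a)) - anc (br b e) (ip c a)"
    unfolding R0_def by (simp add: D_met algebra_simps)
  also have "\<dots> = 0" by (rule anchor_hom)
  finally show ?thesis by (simp add: eq_neg_iff_add_eq_0)
qed

lemma R0_antisym: assumes "ip b e = 0" shows "R0 br D b e c = - R0 br D e b c"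
proof -
  have "br e b = - br b e" using br_symm[of b e] assms by (simp add: eq_neg_iff_add_eq_0 add.commute)
  then show ?thesis unfolding R0_def by (simp add: algebra_simps)
qed


lemma adjD[simp]: "ip (adj ip (\<lambda>y. D y c) x) z = ip x (D z c)"
proof -
  have "\<exists>!y. \<forall>z. ip y z = ip x (D z c)" by (rule repr) simp_all
  then show ?thesis unfolding adj_def by (rule theI'[THEN spec])
qed

lemma adj_addR: "adj ip (\<lambda>y. D y c) (x + x') = adj ip (\<lambda>y. D y c) x + adj ip (\<lambda>y. D y c) x'"
  by (rule nondeg2) (simp del: D_addR D_scR D_minusR D_diffR)
lemma adj_scR: "adj ip (\<lambda>y. D y c) (sc g x) = sc g (adj ip (\<lambda>y. D y c) x)"
  by (rule nondeg2) (simp del: D_addR D_scR D_minusR D_diffR)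
lemma adj_minusR: "adj ip (\<lambda>y. D y c) (- x) = - adj ip (\<lambda>y. D y c) x"
  by (rule nondeg2) (simp del: D_addR D_scR D_minusR D_diffR)
lemma adj_addL: "adj ip (\<lambda>y. D y (c + c')) x = adj ip (\<lambda>y. D y c) x + adj ip (\<lambda>y. D y c') x"
  apply (rule nondeg2) apply (simp only: adjD ip_addL) by simp
lemma adj_minusL: "adj ip (\<lambda>y. D y (- c)) x = - adj ip (\<lambda>y. D y c) x"
  apply (rule nondeg2) apply (simp only: adjD ip_minusL) by simp
lemma adj_scL: "adj ip (\<lambda>y. D y (sc g c)) x = sc g (adj ip (\<lambda>y. D y c) x) + sc (ip x c) (grad g)"
  apply (rule nondeg2) apply (simp only: adjD ip_addL ip_scL ip_grad) by (simp add: algebra_simps)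

lemma RJV4_addE: "RJV4 ip br D c a b (e + e') = RJV4 ip br D c a b e + RJV4 ip br D c a b e'"
  unfolding RJV4_def by (simp add: R0_addM adj_addR algebra_simps del: D_addR D_scR D_minusR D_diffR)
lemma RJV4_scE: "RJV4 ip br D c a b (sc g e) = g * RJV4 ip br D c a b e"
  unfolding RJV4_def by (simp add: R0_scM adj_scR algebra_simps del: D_addR D_scR D_minusR D_diffR)

lemma RJV_ip[simp]: "ip (RJV ip br D c a b) e = RJV4 ip br D c a b e"
proof -
  have "\<exists>!y. \<forall>z. ip y z = RJV4 ip br D c a b z" by (rule repr) (simp_all add: RJV4_addE RJV4_scE)
  then show ?thesis unfolding RJV_def by (rule theI'[THEN spec])
qed

lemma RJV4_addC: "RJV4 ip br D (c + c') a b e = RJV4 ip br D c a b e + RJV4 ip br D c' a b e"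
  unfolding RJV4_def by (simp add: R0_addL R0_addR adj_addL algebra_simps del: D_addR D_scR D_minusR D_diffR)
lemma RJV4_scC: "RJV4 ip br D (sc g c) a b e = g * RJV4 ip br D c a b e"
proof -
  have x: "ip (grad g) (adj ip (\<lambda>y. D y b) e) = ip e (D (grad g) b)"
    using ip_sym[of "grad g" "adj ip (\<lambda>y. D y b) e"] by simp
  show ?thesis
  unfolding RJV4_def using ip_sym[of "D (grad g) b" e] ip_sym[of a c] x
  by (simp add: R0_scL R0_scR adj_scL algebra_simps del: D_addR D_scR D_minusR D_diffR)
qed
lemma RJV4_minusA: "RJV4 ip br D c (- a) b e = - RJV4 ip br D c a b e"
  unfolding RJV4_def by (simp add: R0_minusM adj_minusR algebra_simps del: D_addR D_scR D_minusR D_diffR)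
lemma RJV4_minusB: "RJV4 ip br D c a (- b) e = - RJV4 ip br D c a b e"
  unfolding RJV4_def by (simp add: R0_minusR R0_minusL adj_minusL algebra_simps del: D_addR D_scR D_minusR D_diffR)

lemma RJV_addC: "RJV ip br D (c + c') a b = RJV ip br D c a b + RJV ip br D c' a b"
  by (rule nondeg2) (simp add: RJV4_addC)
lemma RJV_scC: "RJV ip br D (sc g c) a b = sc g (RJV ip br D c a b)"
  by (rule nondeg2) (simp add: RJV4_scC)

lemma RJV4_2: "2 * RJV4 ip br D c a b e = ip (R0 br D c a b) e + ip (R0 br D b e c) a
      + ip (adj ip (\<lambda>x. D x c) a) (adj ip (\<lambda>x. D x b) e)"
  unfolding RJV4_def hf_def[symmetric] by (simp add: mult.assoc[symmetric])

definition submod :: "'s set \<Rightarrow> bool" where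
  "submod P \<longleftrightarrow> 0 \<in> P \<and> (\<forall>x\<in>P. \<forall>y\<in>P. x + y \<in> P) \<and> (\<forall>g. \<forall>x\<in>P. sc g x \<in> P)"

lemma submod_sum: "submod P \<Longrightarrow> (\<And>i. i < n \<Longrightarrow> x i \<in> P) \<Longrightarrow> (\<Sum>i<(n::nat). sc (c i) (x i)) \<in> P"
  by (induction n) (auto simp: submod_def)

lemma submod_diff: "submod P \<Longrightarrow> x \<in> P \<Longrightarrow> y \<in> P \<Longrightarrow> x - y \<in> P"
proof -
  assume P: "submod P" "x \<in> P" "y \<in> P"
  then have "sc (-1) y \<in> P" unfolding submod_def by blast
  then have "x + sc (-1) y \<in> P" using P unfolding submod_def by blast
  then show ?thesis by simp
qed

lemma linP_sum:
  assumes P: "submod P" and ad: "\<And>x y. x \<in> P \<Longrightarrow> y \<in> P \<Longrightarrow> T (x + y) = T x + T y"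
    and hm: "\<And>g x. x \<in> P \<Longrightarrow> T (sc g x) = sc g (T x)"
    and x: "\<And>i. i < n \<Longrightarrow> x i \<in> P"
  shows "T (\<Sum>i<(n::nat). sc (c i) (x i)) = (\<Sum>i<n. sc (c i) (T (x i)))"
  using x
proof (induction n)
  case 0
  have "0 \<in> P" using P unfolding submod_def by blast
  then have "T (sc 0 0) = sc 0 (T 0)" by (rule hm)
  then show ?case by simp
next
  case (Suc n)
  have i1: "(\<Sum>i<n. sc (c i) (x i)) \<in> P" by (rule submod_sum[OF P]) (simp add: Suc.prems)
  have i2: "sc (c n) (x n) \<in> P" using P Suc.prems unfolding submod_def by blast
  have "T (\<Sum>i<Suc n. sc (c i) (x i)) = T (\<Sum>i<n. sc (c i) (x i)) + T (sc (c n) (x n))"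
    using ad[OF i1 i2] by simp
  also have "\<dots> = (\<Sum>i<n. sc (c i) (T (x i))) + sc (c n) (T (x n))"
    using Suc.IH Suc.prems hm[of "x n" "c n"] by simp
  finally show ?case by simp
qed

lemma db_transpose:
  assumes P: "submod P" and b: "dual_basis sc ip P n e f"
  shows "dual_basis sc ip P n f e"
  unfolding dual_basis_def
proof (intro conjI ballI)
  show "\<forall>i<n. f i \<in> P \<and> e i \<in> P" using b unfolding dual_basis_def by blast
  fix p assume p: "p \<in> P"
  define q where "q = (\<Sum>i<n. sc (ip p (e i)) (f i))"
  have qP: "q \<in> P" unfolding q_def by (rule submod_sum[OF P]) (use b in \<open>simp add: dual_basis_def\<close>)
  have "ip q r = ip p r" if r: "r \<in> P" for r
  proof -
    have "ip q r = (\<Sum>i<n. ip p (e i) * ip (f i) r)" unfolding q_def by (simp add: ip_sumL)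
    also have "\<dots> = ip p (\<Sum>i<n. sc (ip r (f i)) (e i))" by (simp add: ip_sumR ip_sym mult.commute)
    also have "(\<Sum>i<n. sc (ip r (f i)) (e i)) = r" using b r unfolding dual_basis_def by auto
    finally show ?thesis .
  qed
  then have z: "ip (q - p) r = 0" if "r \<in> P" for r using that by simp
  have qp: "q - p \<in> P" by (rule submod_diff[OF P qP p])
  then have "q - p = (\<Sum>i<n. sc (ip (q - p) (f i)) (e i))" using b unfolding dual_basis_def by blast
  also have "\<dots> = 0" using z b unfolding dual_basis_def by simp
  finally show "p = (\<Sum>i<n. sc (ip p (e i)) (f i))" unfolding q_def by simp
qed

lemma trace_indep:
  assumes P: "submod P" and ad: "\<And>x y. x \<in> P \<Longrightarrow> y \<in> P \<Longrightarrow> T (x + y) = T x + T y"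
    and hm: "\<And>g x. x \<in> P \<Longrightarrow> T (sc g x) = sc g (T x)"
    and b: "dual_basis sc ip P n e f" and b': "dual_basis sc ip P m e' f'"
  shows "(\<Sum>j<m. ip (T (e' j)) (f' j)) = (\<Sum>i<n. ip (T (e i)) (f i))"
proof -
  have eP: "\<And>i. i < n \<Longrightarrow> e i \<in> P" using b unfolding dual_basis_def by blast
  have fP: "\<And>i. i < n \<Longrightarrow> f i \<in> P" using b unfolding dual_basis_def by blast
  have e'P: "\<And>j. j < m \<Longrightarrow> e' j \<in> P" using b' unfolding dual_basis_def by blast
  have bt: "dual_basis sc ip P m f' e'" by (rule db_transpose[OF P b'])
  have "(\<Sum>j<m. ip (T (e' j)) (f' j)) = (\<Sum>j<m. ip (T (\<Sum>i<n. sc (ip (e' j) (f i)) (e i))) (f' j))"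
  proof (rule sum.cong[OF refl])
    fix j assume "j \<in> {..<m}"
    then have "e' j = (\<Sum>i<n. sc (ip (e' j) (f i)) (e i))" using b e'P unfolding dual_basis_def by auto
    then show "ip (T (e' j)) (f' j) = ip (T (\<Sum>i<n. sc (ip (e' j) (f i)) (e i))) (f' j)" by simp
  qed
  also have "\<dots> = (\<Sum>j<m. ip (\<Sum>i<n. sc (ip (e' j) (f i)) (T (e i))) (f' j))"
    by (simp add: linP_sum[OF P ad hm eP])
  also have "\<dots> = (\<Sum>j<m. \<Sum>i<n. ip (f i) (e' j) * ip (T (e i)) (f' j))"
    by (simp add: ip_sumL ip_sym[of "f _"])
  also have "\<dots> = (\<Sum>i<n. \<Sum>j<m. ip (f i) (e' j) * ip (T (e i)) (f' j))"
    by (rule sum.swap)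
  also have "\<dots> = (\<Sum>i<n. ip (T (e i)) (\<Sum>j<m. sc (ip (f i) (e' j)) (f' j)))"
    by (simp add: ip_sumR mult.commute)
  also have "\<dots> = (\<Sum>i<n. ip (T (e i)) (f i))"
  proof (rule sum.cong[OF refl])
    fix i assume "i \<in> {..<n}"
    then have "f i = (\<Sum>j<m. sc (ip (f i) (e' j)) (f' j))" using bt fP unfolding dual_basis_def by auto
    then show "ip (T (e i)) (\<Sum>j<m. sc (ip (f i) (e' j)) (f' j)) = ip (T (e i)) (f i)" by simp
  qed
  finally show ?thesis .
qed

lemma trace_eq:
  assumes P: "submod P" and ad: "\<And>x y. x \<in> P \<Longrightarrow> y \<in> P \<Longrightarrow> T (x + y) = T x + T y"
    and hm: "\<And>g x. x \<in> P \<Longrightarrow> T (sc g x) = sc g (T x)"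
    and b: "dual_basis sc ip P n e f"
  shows "trace_on sc ip P T = (\<Sum>i<n. ip (T (e i)) (f i))"
  unfolding trace_on_def
proof (rule someI2)
  show "\<exists>n' e' f'. dual_basis sc ip P n' e' f' \<and> (\<Sum>i<n. ip (T (e i)) (f i)) = (\<Sum>i<n'. ip (T (e' i)) (f' i))"
    using b by blast
next
  fix t assume "\<exists>n' e' f'. dual_basis sc ip P n' e' f' \<and> t = (\<Sum>i<n'. ip (T (e' i)) (f' i))"
  then obtain n' e' f' where b': "dual_basis sc ip P n' e' f'" and t: "t = (\<Sum>i<n'. ip (T (e' i)) (f' i))" by blast
  show "t = (\<Sum>i<n. ip (T (e i)) (f i))" unfolding t by (rule trace_indep[OF P ad hm b b'])
qed

lemma submod_UNIV: "submod UNIV" unfolding submod_def by simp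

lemma RicJV_eq: "dual_basis sc ip UNIV n e f \<Longrightarrow>
   Ric_JV sc ip br D a b = (\<Sum>i<n. RJV4 ip br D (e i) a b (f i))"
  unfolding Ric_JV_def by (subst trace_eq[OF submod_UNIV]) (simp_all add: RJV_addC RJV_scC)

lemma RicJV_minusA: "Ric_JV sc ip br D (- a) b = - Ric_JV sc ip br D a b"
proof -
  obtain n e f where b: "dual_basis sc ip UNIV n e f" using basis_ex by blast
  show ?thesis unfolding RicJV_eq[OF b] by (simp add: RJV4_minusA sum_negf)
qed
lemma RicJV_minusB: "Ric_JV sc ip br D a (- b) = - Ric_JV sc ip br D a b"
proof -
  obtain n e f where b: "dual_basis sc ip UNIV n e f" using basis_ex by blast
  show ?thesis unfolding RicJV_eq[OF b] by (simp add: RJV4_minusB sum_negf)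
qed


lemma sum_double: "(\<Sum>i<n + m. g i) = (\<Sum>i<n. g i) + (\<Sum>i<(m::nat). g (n + i))"
  by (induction m) (simp_all add: add_ac)

end

locale CADG = CAD sc ip anc br D
  for sc :: "'r::{comm_ring_1,real_algebra_1} \<Rightarrow> 's::ab_group_add \<Rightarrow> 's"
    and ip :: "'s \<Rightarrow> 's \<Rightarrow> 'r" and anc :: "'s \<Rightarrow> 'r \<Rightarrow> 'r"
    and br :: "'s \<Rightarrow> 's \<Rightarrow> 's" and D :: "'s \<Rightarrow> 's \<Rightarrow> 's" +
  fixes G :: "'s \<Rightarrow> 's"
  assumes GM: "gen_metric sc ip G" and MC: "metric_connection G D"
begin

lemma G_add[simp]: "G (a + b) = G a + G b" using GM unfolding gen_metric_def by blast
lemma G_sc[simp]: "G (sc f a) = sc f (G a)" using GM unfolding gen_metric_def by blast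
lemma G_inv[simp]: "G (G a) = a" using GM unfolding gen_metric_def by blast
lemma G_sa: "ip (G a) b = ip a (G b)" using GM unfolding gen_metric_def by blast
lemma G_zero[simp]: "G 0 = 0"
proof -
  have "G (0+0) = G 0 + G 0" by (rule G_add)
  then show ?thesis by simp
qed
lemma G_minus[simp]: "G (- a) = - G a"
proof -
  have "G (- a + a) = G (-a) + G a" by (rule G_add)
  then have "G (-a) + G a = 0" by simp
  then show ?thesis by (simp add: eq_neg_iff_add_eq_0)
qed
lemma G_diff[simp]: "G (a - b) = G a - G b" by (simp only: diff_conv_add_uminus G_add G_minus)

lemma Vp_iff: "x \<in> Vplus G \<longleftrightarrow> G x = x" unfolding Vplus_def by simp
lemma Vm_iff: "x \<in> Vminus G \<longleftrightarrow> G x = - x" unfolding Vminus_def by simp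

lemma D_Vp: "x \<in> Vplus G \<Longrightarrow> D a x \<in> Vplus G" using MC unfolding metric_connection_def by blast
lemma D_Vm: "x \<in> Vminus G \<Longrightarrow> D a x \<in> Vminus G" using MC unfolding metric_connection_def by blast

lemma orth: assumes "p \<in> Vplus G" "q \<in> Vminus G" shows "ip p q = 0"
proof -
  have "ip p q = ip (G p) q" using assms(1) by (simp add: Vp_iff)
  also have "\<dots> = ip p (G q)" by (rule G_sa)
  also have "\<dots> = - ip p q" using assms(2) by (simp add: Vm_iff)
  finally have h: "ip p q = - ip p q" .
  then have "ip p q + ip p q = 0" by (simp only: eq_neg_iff_add_eq_0)
  then show ?thesis by (rule cancel2s_r)
qed
lemma orth': "p \<in> Vplus G \<Longrightarrow> q \<in> Vminus G \<Longrightarrow> ip q p = 0"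
  using orth[of p q] ip_sym[of q p] by simp

lemma submod_Vp: "submod (Vplus G)" unfolding submod_def by (simp add: Vp_iff)
lemma submod_Vm: "submod (Vminus G)" unfolding submod_def by (simp add: Vm_iff)

lemma Vp_diff: "x \<in> Vplus G \<Longrightarrow> y \<in> Vplus G \<Longrightarrow> x - y \<in> Vplus G" by (simp add: Vp_iff)
lemma Vm_diff: "x \<in> Vminus G \<Longrightarrow> y \<in> Vminus G \<Longrightarrow> x - y \<in> Vminus G" by (simp add: Vm_iff)

lemma R0_Vp: "c \<in> Vplus G \<Longrightarrow> R0 br D x y c \<in> Vplus G"
  unfolding R0_def by (intro Vp_diff D_Vp)
lemma R0_Vm: "c \<in> Vminus G \<Longrightarrow> R0 br D x y c \<in> Vminus G"
  unfolding R0_def by (intro Vm_diff D_Vm)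

lemma adj_zero_p: assumes "c \<in> Vplus G" "a \<in> Vminus G" shows "adj ip (\<lambda>y. D y c) a = 0"
  by (rule nondeg) (simp del: D_addR D_scR D_minusR D_diffR add: orth'[OF D_Vp[OF assms(1)] assms(2)])
lemma adj_zero_m: assumes "c \<in> Vminus G" "a \<in> Vplus G" shows "adj ip (\<lambda>y. D y c) a = 0"
  by (rule nondeg) (simp del: D_addR D_scR D_minusR D_diffR add: orth[OF assms(2) D_Vm[OF assms(1)]])

definition Pp where "Pp x = sc hf (x + G x)"
definition Pm where "Pm x = sc hf (x - G x)"

lemma Pp_in: "Pp x \<in> Vplus G" unfolding Pp_def Vp_iff by (simp add: add.commute)
lemma Pm_in: "Pm x \<in> Vminus G" unfolding Pm_def Vm_iff by (simp add: M.scale_right_diff_distrib)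
lemma decomp: "Pp x + Pm x = x"
proof -
  have "Pp x + Pm x = sc hf (x + G x + (x - G x))" unfolding Pp_def Pm_def by (simp only: M.scale_right_distrib)
  also have "\<dots> = sc hf x + sc hf x" by (simp add: M.scale_right_distrib)
  also have "\<dots> = sc (hf + hf) x" by (simp only: M.scale_left_distrib)
  finally show ?thesis by (simp add: hfhf)
qed
lemma Pp_add: "Pp (a + b) = Pp a + Pp b" unfolding Pp_def by (simp add: algebra_simps)
lemma Pm_add: "Pm (a + b) = Pm a + Pm b" unfolding Pm_def by (simp add: algebra_simps)
lemma Pp_sc: "Pp (sc g a) = sc g (Pp a)" unfolding Pp_def by (simp add: M.scale_right_distrib mult.commute)
lemma Pm_sc: "Pm (sc g a) = sc g (Pm a)" unfolding Pm_def by (simp add: M.scale_right_diff_distrib mult.commute)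
lemma Pp_zero: "Pp 0 = 0" unfolding Pp_def by simp
lemma Pm_zero: "Pm 0 = 0" unfolding Pm_def by simp
lemma Pp_sum: "Pp (\<Sum>i<(n::nat). sc (c i) (x i)) = (\<Sum>i<n. sc (c i) (Pp (x i)))"
  by (induction n) (simp_all only: sum.lessThan_Suc Pp_add Pp_sc Pp_zero sum.empty lessThan_0)
lemma Pm_sum: "Pm (\<Sum>i<(n::nat). sc (c i) (x i)) = (\<Sum>i<n. sc (c i) (Pm (x i)))"
  by (induction n) (simp_all only: sum.lessThan_Suc Pm_add Pm_sc Pm_zero sum.empty lessThan_0)
lemma Pp_id: assumes "p \<in> Vplus G" shows "Pp p = p"
  using decomp[of p] assms by (simp add: Pm_def Vp_iff)
lemma Pm_id: assumes "p \<in> Vminus G" shows "Pm p = p"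
  using decomp[of p] assms by (simp add: Pp_def Vm_iff)

lemma ip_Pp: "p \<in> Vplus G \<Longrightarrow> ip p (Pp z) = ip p z"
proof -
  assume p: "p \<in> Vplus G"
  have "ip p z = ip p (Pp z + Pm z)" by (simp add: decomp)
  also have "\<dots> = ip p (Pp z)" using orth[OF p Pm_in] by simp
  finally show ?thesis by simp
qed
lemma ip_Pm: "p \<in> Vminus G \<Longrightarrow> ip p (Pm z) = ip p z"
proof -
  assume p: "p \<in> Vminus G"
  have "ip p z = ip p (Pp z + Pm z)" by (simp add: decomp)
  also have "\<dots> = ip p (Pm z)" using orth'[OF Pp_in p] by simp
  finally show ?thesis by simp
qed

lemma db_Vp: assumes b: "dual_basis sc ip UNIV n e f"
  shows "dual_basis sc ip (Vplus G) n (\<lambda>i. Pp (e i)) (\<lambda>i. Pp (f i))"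
  unfolding dual_basis_def
proof (intro conjI allI impI ballI)
  fix i show "Pp (e i) \<in> Vplus G" "Pp (f i) \<in> Vplus G" by (rule Pp_in)+
next
  fix p assume p: "p \<in> Vplus G"
  have e: "p = (\<Sum>i<n. sc (ip p (f i)) (e i))" using b unfolding dual_basis_def by blast
  have "p = Pp p" using Pp_id[OF p] by (rule sym)
  also have "Pp p = Pp (\<Sum>i<n. sc (ip p (f i)) (e i))" using e by (rule arg_cong)
  also have "\<dots> = (\<Sum>i<n. sc (ip p (f i)) (Pp (e i)))" by (rule Pp_sum)
  also have "\<dots> = (\<Sum>i<n. sc (ip p (Pp (f i))) (Pp (e i)))" by (simp add: ip_Pp[OF p])
  finally show "p = (\<Sum>i<n. sc (ip p (Pp (f i))) (Pp (e i)))" .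
qed

lemma db_Vm: assumes b: "dual_basis sc ip UNIV n e f"
  shows "dual_basis sc ip (Vminus G) n (\<lambda>i. Pm (e i)) (\<lambda>i. Pm (f i))"
  unfolding dual_basis_def
proof (intro conjI allI impI ballI)
  fix i show "Pm (e i) \<in> Vminus G" "Pm (f i) \<in> Vminus G" by (rule Pm_in)+
next
  fix p assume p: "p \<in> Vminus G"
  have e: "p = (\<Sum>i<n. sc (ip p (f i)) (e i))" using b unfolding dual_basis_def by blast
  have "p = Pm p" using Pm_id[OF p] by (rule sym)
  also have "Pm p = Pm (\<Sum>i<n. sc (ip p (f i)) (e i))" using e by (rule arg_cong)
  also have "\<dots> = (\<Sum>i<n. sc (ip p (f i)) (Pm (e i)))" by (rule Pm_sum)
  also have "\<dots> = (\<Sum>i<n. sc (ip p (Pm (f i))) (Pm (e i)))" by (simp add: ip_Pm[OF p])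
  finally show "p = (\<Sum>i<n. sc (ip p (Pm (f i))) (Pm (e i)))" .
qed


lemma ip_PpL: "ip (Pp p) (Pp z) = ip p (Pp z)"
proof -
  have "ip p (Pp z) = ip (Pp p + Pm p) (Pp z)" by (simp add: decomp)
  also have "\<dots> = ip (Pp p) (Pp z)" using orth'[OF Pp_in Pm_in] by simp
  finally show ?thesis by simp
qed
lemma ip_PmL: "ip (Pm p) (Pm z) = ip p (Pm z)"
proof -
  have "ip p (Pm z) = ip (Pp p + Pm p) (Pm z)" by (simp add: decomp)
  also have "\<dots> = ip (Pm p) (Pm z)" using orth[OF Pp_in Pm_in] by simp
  finally show ?thesis by simp
qed

lemma db_comb: assumes B: "dual_basis sc ip UNIV n e f"
  shows "dual_basis sc ip UNIV (n + n) (\<lambda>i. if i < n then Pp (e i) else Pm (e (i - n)))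
     (\<lambda>i. if i < n then Pp (f i) else Pm (f (i - n)))"
  unfolding dual_basis_def
proof (intro conjI allI impI ballI)
  fix i show "(if i < n then Pp (e i) else Pm (e (i - n))) \<in> UNIV"
    "(if i < n then Pp (f i) else Pm (f (i - n))) \<in> UNIV" by simp_all
next
  fix p :: 's
  have bp: "dual_basis sc ip (Vplus G) n (\<lambda>i. Pp (e i)) (\<lambda>i. Pp (f i))" by (rule db_Vp[OF B])
  have bm: "dual_basis sc ip (Vminus G) n (\<lambda>i. Pm (e i)) (\<lambda>i. Pm (f i))" by (rule db_Vm[OF B])
  have "Pp p = (\<Sum>i<n. sc (ip (Pp p) (Pp (f i))) (Pp (e i)))" using bp Pp_in unfolding dual_basis_def by blast
  also have "\<dots> = (\<Sum>i<n. sc (ip p (Pp (f i))) (Pp (e i)))" by (simp add: ip_PpL)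
  finally have 1: "Pp p = (\<Sum>i<n. sc (ip p (Pp (f i))) (Pp (e i)))" .
  have "Pm p = (\<Sum>i<n. sc (ip (Pm p) (Pm (f i))) (Pm (e i)))" using bm Pm_in unfolding dual_basis_def by blast
  also have "\<dots> = (\<Sum>i<n. sc (ip p (Pm (f i))) (Pm (e i)))" by (simp add: ip_PmL)
  finally have 2: "Pm p = (\<Sum>i<n. sc (ip p (Pm (f i))) (Pm (e i)))" .
  have "(\<Sum>i<n + n. sc (ip p (if i < n then Pp (f i) else Pm (f (i - n)))) (if i < n then Pp (e i) else Pm (e (i - n))))
     = (\<Sum>i<n. sc (ip p (Pp (f i))) (Pp (e i))) + (\<Sum>i<n. sc (ip p (Pm (f i))) (Pm (e i)))"
    by (simp add: sum_double)
  also have "\<dots> = p" using 1 2 decomp[of p] by simp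
  finally show "p = (\<Sum>i<n + n. sc (ip p (if i < n then Pp (f i) else Pm (f (i - n)))) (if i < n then Pp (e i) else Pm (e (i - n))))" by simp
qed

lemma term_p: assumes a: "a \<in> Vminus G" and c: "c \<in> Vplus G"
  shows "2 * RJV4 ip br D c a b e = ip (R0 br D c a b) e"
  unfolding RJV4_2 using orth[OF R0_Vp[OF c] a] adj_zero_p[OF c a] by simp

lemma term_m: assumes b: "b \<in> Vplus G" and c: "c \<in> Vminus G" and e: "e \<in> Vminus G"
  shows "2 * RJV4 ip br D c a b e = ip (R0 br D e b a) c"
proof -
  have "ip (R0 br D b e c) a = - ip c (R0 br D b e a)" by (rule R0_skew)
  also have "\<dots> = ip c (R0 br D e b a)" using R0_antisym[OF orth[OF b e]] by simp
  also have "\<dots> = ip (R0 br D e b a) c" by (rule ip_sym)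
  finally have x: "ip (R0 br D b e c) a = ip (R0 br D e b a) c" .
  show ?thesis
    unfolding RJV4_2 using orth[OF R0_Vp[OF b] e] adj_zero_p[OF b e] x by simp
qed

lemma core: assumes a: "a \<in> Vminus G" and b: "b \<in> Vplus G"
  shows "2 * Ric_JV sc ip br D a b = Ric_GF sc ip br D (Vplus G) a b + Ric_GF sc ip br D (Vminus G) b a"
proof -
  obtain n e f where B: "dual_basis sc ip UNIV n e f" using basis_ex by blast
  have gp: "Ric_GF sc ip br D (Vplus G) a b = (\<Sum>i<n. ip (R0 br D (Pp (e i)) a b) (Pp (f i)))"
    unfolding Ric_GF_def
  proof (rule trace_eq[OF submod_Vp _ _ db_Vp[OF B]])
    fix x y show "R0 br D (x + y) a b = R0 br D x a b + R0 br D y a b" by (rule R0_addL)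
  next
    fix g x assume x: "x \<in> Vplus G"
    show "R0 br D (sc g x) a b = sc g (R0 br D x a b)" using orth[OF x a] by (simp add: R0_scL)
  qed
  have gm: "Ric_GF sc ip br D (Vminus G) b a = (\<Sum>i<n. ip (R0 br D (Pm (f i)) b a) (Pm (e i)))"
    unfolding Ric_GF_def
  proof (rule trace_eq[OF submod_Vm _ _ db_transpose[OF submod_Vm db_Vm[OF B]]])
    fix x y show "R0 br D (x + y) b a = R0 br D x b a + R0 br D y b a" by (rule R0_addL)
  next
    fix g x assume x: "x \<in> Vminus G"
    show "R0 br D (sc g x) b a = sc g (R0 br D x b a)" using orth'[OF b x] by (simp add: R0_scL)
  qed
  have "Ric_JV sc ip br D a b = (\<Sum>i<n + n. RJV4 ip br D (if i < n then Pp (e i) else Pm (e (i - n))) a b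
          (if i < n then Pp (f i) else Pm (f (i - n))))"
    by (rule RicJV_eq[OF db_comb[OF B]])
  also have "\<dots> = (\<Sum>i<n. RJV4 ip br D (Pp (e i)) a b (Pp (f i))) + (\<Sum>i<n. RJV4 ip br D (Pm (e i)) a b (Pm (f i)))"
    by (simp add: sum_double)
  finally have "2 * Ric_JV sc ip br D a b = (\<Sum>i<n. 2 * RJV4 ip br D (Pp (e i)) a b (Pp (f i)))
      + (\<Sum>i<n. 2 * RJV4 ip br D (Pm (e i)) a b (Pm (f i)))"
    by (simp add: sum_distrib_left distrib_left)
  also have "\<dots> = (\<Sum>i<n. ip (R0 br D (Pp (e i)) a b) (Pp (f i))) + (\<Sum>i<n. ip (R0 br D (Pm (f i)) b a) (Pm (e i)))"
    by (simp add: term_p[OF a Pp_in] term_m[OF b Pm_in Pm_in])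
  finally show ?thesis using gp gm by simp
qed

end

theorem theorem2p4:
  fixes sc :: "'r::{comm_ring_1,real_algebra_1} \<Rightarrow> 's::ab_group_add \<Rightarrow> 's"
    and ip :: "'s \<Rightarrow> 's \<Rightarrow> 'r" and anc :: "'s \<Rightarrow> 'r \<Rightarrow> 'r"
    and br :: "'s \<Rightarrow> 's \<Rightarrow> 's" and G :: "'s \<Rightarrow> 's" and D :: "'s \<Rightarrow> 's \<Rightarrow> 's"
  assumes "courant_algebroid sc ip anc br"
    and "gen_metric sc ip G"
    and "gen_connection sc ip anc D"
    and "metric_connection G D"
  shows "(\<forall>a\<in>Vminus G. \<forall>b\<in>Vplus G.
            Ric_SSCV sc ip br D G a b = 2 * Ric_JV sc ip br D a b \<and>
            2 * Ric_JV sc ip br D a b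
              = Ric_GF sc ip br D (Vplus G) a b + Ric_GF sc ip br D (Vminus G) b a)
       \<and> (\<forall>a\<in>Vplus G. \<forall>b\<in>Vminus G.
            Ric_SSCV sc ip br D G a b = 2 * Ric_JV sc ip br D a b \<and>
            2 * Ric_JV sc ip br D a b
              = Ric_GF sc ip br D (Vminus G) a b + Ric_GF sc ip br D (Vplus G) b a)"
proof -
  interpret G1: CADG sc ip anc br D G
    by (intro CADG.intro CAD.intro CADG_axioms.intro assms)
  have gm2: "gen_metric sc ip (\<lambda>x. - G x)"
    unfolding gen_metric_def
  proof (intro conjI allI)
    fix a b f
    show "- G (a + b) = - G a + - G b" by simp
    show "- G (sc f a) = sc f (- G a)" by simp
    show "- G (- G a) = a" by simp
    show "ip (- G a) b = ip a (- G b)" using G1.G_sa[of a b] by simp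
  qed
  have vp2: "Vplus (\<lambda>x. - G x) = Vminus G" unfolding Vplus_def Vminus_def
    by (intro Collect_cong) (metis minus_minus)
  have vm2: "Vminus (\<lambda>x. - G x) = Vplus G" unfolding Vplus_def Vminus_def
    by (intro Collect_cong) (metis minus_minus)
  have mc2: "metric_connection (\<lambda>x. - G x) D"
    using assms(4) unfolding metric_connection_def vp2 vm2 by blast
  interpret G2: CADG sc ip anc br D "\<lambda>x. - G x"
    by (intro CADG.intro CAD.intro CADG_axioms.intro assms gm2 mc2)
  show ?thesis
  proof (intro conjI ballI)
    fix a b assume a: "a \<in> Vminus G" and b: "b \<in> Vplus G"
    have ga: "G a = - a" and gb: "G b = b" using a b unfolding Vplus_def Vminus_def by auto
    have "Ric_SSCV sc ip br D G a b = Ric_JV sc ip br D a b - Ric_JV sc ip br D (- a) b"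
      by (simp only: Ric_SSCV_def ga gb)
    also have "\<dots> = Ric_JV sc ip br D a b + Ric_JV sc ip br D a b"
      by (simp only: G1.RicJV_minusA diff_minus_eq_add)
    finally show "Ric_SSCV sc ip br D G a b = 2 * Ric_JV sc ip br D a b" by (simp only: mult_2)
    show "2 * Ric_JV sc ip br D a b
              = Ric_GF sc ip br D (Vplus G) a b + Ric_GF sc ip br D (Vminus G) b a"
      by (rule G1.core[OF a b])
  next
    fix a b assume a: "a \<in> Vplus G" and b: "b \<in> Vminus G"
    have ga: "G a = a" and gb: "G b = - b" using a b unfolding Vplus_def Vminus_def by auto
    have "Ric_SSCV sc ip br D G a b = Ric_JV sc ip br D a b - Ric_JV sc ip br D a (- b)"
      by (simp only: Ric_SSCV_def ga gb)
    also have "\<dots> = Ric_JV sc ip br D a b + Ric_JV sc ip br D a b"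
      by (simp only: G1.RicJV_minusB diff_minus_eq_add)
    finally show "Ric_SSCV sc ip br D G a b = 2 * Ric_JV sc ip br D a b" by (simp only: mult_2)
    have a2: "a \<in> Vminus (\<lambda>x. - G x)" using a vm2 by simp
    have b2: "b \<in> Vplus (\<lambda>x. - G x)" using b vp2 by simp
    show "2 * Ric_JV sc ip br D a b
              = Ric_GF sc ip br D (Vminus G) a b + Ric_GF sc ip br D (Vplus G) b a"
      using G2.core[OF a2 b2] unfolding vp2 vm2 .
  qed
qed

end
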